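(* Let $\mu, \nu$ be compactly supported probability measures on $\mathbb{R}$, with $\mu$ not a point mass, and let $p, q$ be real polynomials, not both zero. Suppose the operator $Q = p(x) L_\nu L_\mu + q(x) L_\mu$ on $\mathbb{R}[x]$ has a polynomial system of eigenfunctions $\{P_n\}_{n\ge0}$ which is orthogonal with respect to $\mu$, i.e. $\int P_nP_m\,d\mu = 0$ for $n\neq m$. Then $\mu = \Phi_{\beta,\gamma}[\nu]$ for some $\beta \in \mathbb{R}$ and $\gamma > 0$.
   Context: $L_\mu[f](x) = \int \frac{f(x)-f(y)}{x-y}\,d\mu(y)$ on polynomials, similarly $L_\nu$. A polynomial system is a family $\{P_n\}_{n\ge0}$ with $\deg P_n=n$; it is a system of eigenfunctions of $Q$ if $Q[P_n]=\lambda_nP_n$ for some $\lambda_n\in\mathbb{R}$, for all $n$. For a probability measure $\nu$, $\beta\in\mathbb{R}$, $\gamma>0$, $\Phi_{\beta,\gamma}[\nu]$ is the probability measure $\mu$ with Cauchy transform $G_\mu(z) = 1/(z-\beta-\gamma G_\nu(z))$, where $G_\mu(z)=\int\frac{d\mu(x)}{z-x}$; equivalently it prepends $\beta$ and $\gamma$ to the Jacobi parameter sequences of $\nu$. *)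

theory Defs
  imports "HOL-Probability.Probability" "HOL-Computational_Algebra.Polynomial"
begin

definition moment :: "real measure \<Rightarrow> nat \<Rightarrow> real" where
  "moment M i = (\<integral>y. y ^ i \<partial>M)"

text \<open>The operator L_mu on polynomials:
  L_mu[f](x) = integral of (f(x)-f(y))/(x-y) dmu(y).
  Since (f(x)-f(y))/(x-y) = sum_k c_k sum_{j<k} x^j y^(k-1-j) for f = sum_k c_k x^k,
  integrating in y gives the polynomial below.\<close>
definition Lop :: "real measure \<Rightarrow> real poly \<Rightarrow> real poly" where
  "Lop M f = (\<Sum>k\<le>degree f. smult (coeff f k)
                 (\<Sum>j<k. monom (moment M (k - 1 - j)) j))"

definition cauchy_transform :: "real measure \<Rightarrow> complex \<Rightarrow> complex" where
  "cauchy_transform M z = (\<integral>x. 1 / (z - complex_of_real x) \<partial>M)"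

text \<open>mu = Phi_{beta,gamma}[nu]: G_mu(z) = 1/(z - beta - gamma G_nu(z)) off the real axis.\<close>
definition is_Phi :: "real \<Rightarrow> real \<Rightarrow> real measure \<Rightarrow> real measure \<Rightarrow> bool" where
  "is_Phi \<beta> \<gamma> N M \<longleftrightarrow>
     (\<forall>z. Im z \<noteq> 0 \<longrightarrow>
        cauchy_transform M z = 1 / (z - complex_of_real \<beta> - complex_of_real \<gamma> * cauchy_transform N z))"

definition compactly_supported :: "real measure \<Rightarrow> bool" where
  "compactly_supported M \<longleftrightarrow> (\<exists>K. compact K \<and> K \<in> sets M \<and> emeasure M (space M - K) = 0)"

end

theory Submission
  imports Defs
begin

definition LopG :: "(nat \<Rightarrow> 'a::comm_ring_1) \<Rightarrow> 'a poly \<Rightarrow> 'a poly" where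
  "LopG m f = (\<Sum>k\<le>degree f. smult (coeff f k) (\<Sum>j<k. monom (m (k - 1 - j)) j))"

definition phiS :: "(nat \<Rightarrow> 'a::comm_ring_1) \<Rightarrow> 'a poly \<Rightarrow> 'a" where
  "phiS m f = (\<Sum>k\<le>degree f. coeff f k * m k)"

lemma Lop_LopG: "Lop M f = LopG (moment M) f"
  unfolding Lop_def LopG_def ..

lemma sum_deg_ext:
  fixes f :: "'a::comm_ring_1 poly"
  assumes "degree f \<le> n"
  shows "(\<Sum>k\<le>n. coeff f k * h k) = (\<Sum>k\<le>degree f. coeff f k * h k)"
  using assms by (intro sum.mono_neutral_right) (auto intro!: le_degree)

lemma coeff_LopG_gen:
  assumes "degree f \<le> n"
  shows "coeff (LopG m f) i = (\<Sum>k\<le>n. coeff f k * (if i < k then m (k - 1 - i) else 0))"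
proof -
  have "coeff (LopG m f) i = (\<Sum>k\<le>degree f. coeff f k * (if i < k then m (k - 1 - i) else 0))"
    unfolding LopG_def coeff_sum coeff_smult coeff_monom
    by (intro sum.cong refl) (auto simp: sum.delta[where S="{..<_}"] if_distrib cong: if_cong)
  also have "\<dots> = (\<Sum>k\<le>n. coeff f k * (if i < k then m (k - 1 - i) else 0))"
    using sum_deg_ext[OF assms] by metis
  finally show ?thesis .
qed

lemma phiS_gen: "degree f \<le> n \<Longrightarrow> phiS m f = (\<Sum>k\<le>n. coeff f k * m k)"
  unfolding phiS_def using sum_deg_ext by metis

lemma LopG_add: "LopG m (f + g) = LopG m f + LopG m g"
proof (rule poly_eqI)
  fix i
  let ?n = "max (degree f) (degree g)"
  have "degree (f+g) \<le> ?n" by (simp add: degree_add_le)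
  thus "coeff (LopG m (f + g)) i = coeff (LopG m f + LopG m g) i"
    by (simp add: coeff_LopG_gen[of _ ?n] distrib_right sum.distrib)
qed

lemma LopG_smult: "LopG m (smult c f) = smult c (LopG m f)"
proof (rule poly_eqI)
  fix i
  have "degree (smult c f) \<le> degree f" by (simp add: degree_smult_le)
  thus "coeff (LopG m (smult c f)) i = coeff (smult c (LopG m f)) i"
    by (simp add: coeff_LopG_gen[of _ "degree f"] sum_distrib_left mult_ac)
qed

lemma LopG_0[simp]: "LopG m 0 = 0" unfolding LopG_def by simp
lemma LopG_const[simp]: "LopG m [:c:] = 0" unfolding LopG_def by simp

lemma LopG_minus: "LopG m (f - g) = LopG m f - LopG m g"
  using LopG_add[of m "f - g" g] by simp

lemma LopG_sum: "LopG m (\<Sum>i\<in>A. f i) = (\<Sum>i\<in>A. LopG m (f i))"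
  by (induction A rule: infinite_finite_induct) (auto simp: LopG_add)

lemma phiS_add: "phiS m (f + g) = phiS m f + phiS m g"
proof -
  let ?n = "max (degree f) (degree g)"
  have "degree (f+g) \<le> ?n" by (simp add: degree_add_le)
  thus ?thesis by (simp add: phiS_gen[of _ ?n] distrib_right sum.distrib)
qed

lemma phiS_smult: "phiS m (smult c f) = c * phiS m f"
  using degree_smult_le[of c f] by (simp add: phiS_gen[of "smult c f" "degree f"]) (simp add: phiS_def sum_distrib_left mult_ac)

lemma phiS_0[simp]: "phiS m 0 = 0" unfolding phiS_def by simp

lemma phiS_minus: "phiS m (f - g) = phiS m f - phiS m g"
  using phiS_add[of m "f - g" g] by simp

lemma LopG_pCons: "LopG m (pCons a f) = pCons 0 (LopG m f) + [:phiS m f:]"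
proof (rule poly_eqI)
  fix i
  have d: "degree (pCons a f) \<le> Suc (degree f)" by (simp add: degree_pCons_le)
  show "coeff (LopG m (pCons a f)) i = coeff (pCons 0 (LopG m f) + [:phiS m f:]) i"
  proof (cases i)
    case 0
    then show ?thesis
      by (simp add: coeff_LopG_gen[OF d] sum.atMost_Suc_shift phiS_def del: sum.atMost_Suc)
  next
    case (Suc i')
    then show ?thesis
      by (simp add: coeff_LopG_gen[OF d] coeff_LopG_gen[of f "degree f"] sum.atMost_Suc_shift del: sum.atMost_Suc, intro sum.cong, auto)
  qed
qed

lemma poly_rep1: "degree (f::'a::zero poly) \<le> 1 \<Longrightarrow> f = [:coeff f 0, coeff f 1:]"
  by (rule poly_eqI) (auto simp: coeff_pCons coeff_eq_0 eval_nat_numeral split: nat.split)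
lemma poly_rep2: "degree (f::'a::zero poly) \<le> 2 \<Longrightarrow> f = [:coeff f 0, coeff f 1, coeff f 2:]"
  by (rule poly_eqI) (auto simp: coeff_pCons coeff_eq_0 eval_nat_numeral split: nat.split)
lemma poly_rep3: "degree (f::'a::zero poly) \<le> 3 \<Longrightarrow> f = [:coeff f 0, coeff f 1, coeff f 2, coeff f 3:]"
  by (rule poly_eqI) (auto simp: coeff_pCons coeff_eq_0 eval_nat_numeral split: nat.split)
lemma poly_rep4: "degree (f::'a::zero poly) \<le> 4 \<Longrightarrow> f = [:coeff f 0, coeff f 1, coeff f 2, coeff f 3, coeff f 4:]"
  by (rule poly_eqI) (auto simp: coeff_pCons coeff_eq_0 eval_nat_numeral split: nat.split)

lemma phiS_pCons: "phiS m (pCons a f) = a * m 0 + phiS (\<lambda>k. m (Suc k)) f"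
proof -
  have "degree (pCons a f) \<le> Suc (degree f)" by (simp add: degree_pCons_le)
  hence "phiS m (pCons a f) = (\<Sum>k\<le>Suc (degree f). coeff (pCons a f) k * m k)" by (rule phiS_gen)
  also have "\<dots> = a * m 0 + phiS (\<lambda>k. m (Suc k)) f"
    by (simp add: sum.atMost_Suc_shift phiS_def del: sum.atMost_Suc)
  finally show ?thesis .
qed

lemma phiS_const: "phiS m [:c:] = c * m 0"
  by (simp add: phiS_def)

lemma basis_induct:
  fixes P :: "nat \<Rightarrow> 'a::field poly"
  assumes deg: "\<forall>k. P k \<noteq> 0 \<and> degree (P k) = k"
    and SP: "\<And>k. S (P k)"
    and Sadd: "\<And>f g. S f \<Longrightarrow> S g \<Longrightarrow> S (f + g)"
    and Ssm: "\<And>c f. S f \<Longrightarrow> S (smult c f)"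
  shows "S f"
proof -
  have "\<forall>f. degree f \<le> n \<longrightarrow> S f" for n
  proof (induction n)
    case 0
    show ?case
    proof (intro allI impI)
      fix f :: "'a poly" assume "degree f \<le> 0"
      hence f: "f = [:coeff f 0:]" by (metis degree_0_id le_zero_eq)
      have P0: "P 0 = [:coeff (P 0) 0:]" using deg by (metis degree_0_id)
      have "coeff (P 0) 0 \<noteq> 0" using deg P0 by (metis pCons_0_0)
      note P0 = P0 this
      obtain d where d: "P 0 = [:d:]" "d \<noteq> 0" using P0 by metis
      have "f = smult (coeff f 0 / d) (P 0)"
        using d by (subst f) simp
      thus "S f" using Ssm SP by metis
    qed
  next
    case (Suc n)
    show ?case
    proof (intro allI impI)
      fix f :: "'a poly" assume df: "degree f \<le> Suc n"
      define r where "r = f - smult (coeff f (Suc n) / lead_coeff (P (Suc n))) (P (Suc n))"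
      have lc: "lead_coeff (P (Suc n)) \<noteq> 0" using deg by (metis leading_coeff_0_iff)
      have dr: "degree r \<le> Suc n" unfolding r_def using deg df
        by (metis degree_diff_le degree_smult_le order_trans)
      have "coeff r (Suc n) = 0" unfolding r_def using lc deg by simp
      hence "degree r \<le> n"
      proof -
        assume c0: "coeff r (Suc n) = 0"
        show "degree r \<le> n"
        proof (rule ccontr)
          assume "\<not> degree r \<le> n"
          hence "degree r = Suc n" using dr by linarith
          hence "lead_coeff r = 0" using c0 by simp
          hence "r = 0" by simp
          thus False using \<open>degree r = Suc n\<close> by simp
        qed
      qed
      hence Sr: "S r" using Suc.IH by blast
      have "f = r + smult (coeff f (Suc n) / lead_coeff (P (Suc n))) (P (Suc n))"
        unfolding r_def by simp
      thus "S f" using Sadd[OF Sr Ssm[OF SP]] by metis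
    qed
  qed
  thus ?thesis by blast
qed

lemma LopG_c2: "LopG m [:a,b:] = [:b * m 0:]"
  by (simp add: LopG_pCons phiS_pCons phiS_const)
lemma LopG_c3: "LopG m [:a,b,c:] = [:b*m 0 + c*m 1, c*m 0:]"
  by (simp add: LopG_pCons phiS_pCons phiS_const)
lemma LopG_c4: "LopG m [:a,b,c,d:] = [:b*m 0 + c*m 1 + d*m 2, c*m 0 + d*m 1, d*m 0:]"
  by (simp add: LopG_pCons phiS_pCons phiS_const eval_nat_numeral algebra_simps)
lemma LopG_c5: "LopG m [:a,b,c,d,e:] = [:b*m 0 + c*m 1 + d*m 2 + e * m 3, c*m 0 + d*m 1 + e * m 2, d*m 0 + e * m 1, e * m 0:]"
  by (simp add: LopG_pCons phiS_pCons phiS_const eval_nat_numeral algebra_simps)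

definition Qop :: "(nat \<Rightarrow> real) \<Rightarrow> (nat \<Rightarrow> real) \<Rightarrow> real poly \<Rightarrow> real poly \<Rightarrow> real poly \<Rightarrow> real poly" where
  "Qop mm nn p q f = p * LopG nn (LopG mm f) + q * LopG mm f"

lemma Qop_add: "Qop mm nn p q (f + g) = Qop mm nn p q f + Qop mm nn p q g"
  unfolding Qop_def by (simp add: LopG_add algebra_simps)
lemma Qop_smult: "Qop mm nn p q (smult c f) = smult c (Qop mm nn p q f)"
  unfolding Qop_def by (simp add: LopG_smult algebra_simps smult_add_right)
lemma Qop_const: "Qop mm nn p q [:c:] = 0"
  unfolding Qop_def by simp
lemma Qop_X: "Qop mm nn p q ([:0,1:] * f) = [:0,1:] * Qop mm nn p q f
   + smult (phiS nn (LopG mm f)) p + smult (phiS mm f) q"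
  unfolding Qop_def by (simp add: LopG_pCons LopG_add algebra_simps mult_pCons_right)

lemma Qop_sym:
  fixes P :: "nat \<Rightarrow> real poly"
  assumes deg: "\<forall>k. P k \<noteq> 0 \<and> degree (P k) = k"
    and eig: "\<forall>k. Qop mm nn p q (P k) = smult (c k) (P k)"
    and orth: "\<forall>k j. k \<noteq> j \<longrightarrow> phiS mm (P k * P j) = 0"
  shows "phiS mm (g * Qop mm nn p q f) = phiS mm (f * Qop mm nn p q g)"
proof -
  let ?Q = "Qop mm nn p q"
  have 1: "phiS mm (P j * ?Q f) = phiS mm (f * ?Q (P j))" for j f
  proof (rule basis_induct[OF deg, of "\<lambda>f. phiS mm (P j * ?Q f) = phiS mm (f * ?Q (P j))"])
    fix k
    show "phiS mm (P j * ?Q (P k)) = phiS mm (P k * ?Q (P j))"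
    proof (cases "k = j")
      case True then show ?thesis by simp
    next
      case False
      then show ?thesis using orth eig
        by (simp add: phiS_smult mult.commute)
    qed
  next
    fix f g assume "phiS mm (P j * ?Q f) = phiS mm (f * ?Q (P j))"
      "phiS mm (P j * ?Q g) = phiS mm (g * ?Q (P j))"
    thus "phiS mm (P j * ?Q (f + g)) = phiS mm ((f + g) * ?Q (P j))"
      by (simp add: Qop_add distrib_left distrib_right phiS_add)
  next
    fix c f assume "phiS mm (P j * ?Q f) = phiS mm (f * ?Q (P j))"
    thus "phiS mm (P j * ?Q (smult c f)) = phiS mm (smult c f * ?Q (P j))"
      by (simp add: Qop_smult phiS_smult)
  qed
  show ?thesis
  proof (rule basis_induct[OF deg, of "\<lambda>g. phiS mm (g * ?Q f) = phiS mm (f * ?Q g)"])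
    fix k show "phiS mm (P k * ?Q f) = phiS mm (f * ?Q (P k))" by (rule 1)
  next
    fix g h assume "phiS mm (g * ?Q f) = phiS mm (f * ?Q g)" "phiS mm (h * ?Q f) = phiS mm (f * ?Q h)"
    thus "phiS mm ((g + h) * ?Q f) = phiS mm (f * ?Q (g + h))"
      by (simp add: Qop_add distrib_left distrib_right phiS_add)
  next
    fix c g assume "phiS mm (g * ?Q f) = phiS mm (f * ?Q g)"
    thus "phiS mm (smult c g * ?Q f) = phiS mm (f * ?Q (smult c g))"
      by (simp add: Qop_smult phiS_smult)
  qed
qed

lemma LopG_mult_p:
  assumes "\<forall>g. phiS mm (g * p) = 0"
  shows "LopG mm (g * p) = g * LopG mm p"
proof (induction g)
  case (pCons a g)
  have "pCons a g * p = smult a p + [:0,1:] * (g * p)" by (simp add: algebra_simps)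
  hence "LopG mm (pCons a g * p) = smult a (LopG mm p) + LopG mm (pCons 0 (g * p))"
    by (simp add: LopG_add LopG_smult)
  also have "LopG mm (pCons 0 (g * p)) = pCons 0 (g * LopG mm p)"
    using pCons.IH assms by (simp add: LopG_pCons)
  finally show ?case by simp
qed simp

lemma pCons0_add: "pCons 0 (f + g) = pCons 0 f + pCons (0::'a::comm_monoid_add) g" by simp
lemma pCons0_smult: "pCons 0 (smult c f) = smult c (pCons (0::'a::comm_semiring_0) f)" by simp

lemma aux1: "(a::real)*x + c*d = 0 \<Longrightarrow> a*g + c = 0 \<Longrightarrow> a*x = a*(g*d)"
proof -
  assume h: "a*x + c*d = 0" "a*g + c = 0"
  hence "c = -(a*g)" by linarith
  thus ?thesis using h(1) by (simp add: algebra_simps)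
qed

lemma alg_main:
  fixes mm nn :: "nat \<Rightarrow> real" and p q :: "real poly" and P :: "nat \<Rightarrow> real poly"
  assumes m0: "mm 0 = 1" and n0: "nn 0 = 1"
    and deg: "\<forall>k. P k \<noteq> 0 \<and> degree (P k) = k"
    and eig: "\<forall>k. \<exists>c. Qop mm nn p q (P k) = smult c (P k)"
    and orth: "\<forall>k j. k \<noteq> j \<longrightarrow> phiS mm (P k * P j) = 0"
    and pq: "p \<noteq> 0 \<or> q \<noteq> 0"
    and gam: "mm 2 - (mm 1)^2 > 0"
  shows "(\<forall>f. phiS mm (f * [:- mm 1, 1:]) = (mm 2 - (mm 1)^2) * phiS nn (LopG mm f))
    \<or> (\<exists>s. nn 1 = s \<and> nn 2 = s^2 \<and>
         (\<forall>f. phiS mm (f * [:- mm 1, 1:]) = (mm 2 - (mm 1)^2) * poly (LopG mm f) s))"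
proof -
  define Q where "Q = Qop mm nn p q"
  define \<gamma> where "\<gamma> = mm 2 - (mm 1)^2"
  obtain c where c: "\<forall>k. Q (P k) = smult (c k) (P k)" using eig unfolding Q_def by metis
  have sym: "phiS mm (g * Q f) = phiS mm (f * Q g)" for f g
    unfolding Q_def by (rule Qop_sym[OF deg _ orth]) (use c Q_def in auto)
  have Qadd: "Q (f + g) = Q f + Q g" for f g unfolding Q_def by (rule Qop_add)
  have Qsm: "Q (smult a f) = smult a (Q f)" for a f unfolding Q_def by (rule Qop_smult)
  have Qc: "Q [:a:] = 0" for a unfolding Q_def by (rule Qop_const)
  have QX: "Q ([:0,1:] * f) = [:0,1:] * Q f + smult (phiS nn (LopG mm f)) p + smult (phiS mm f) q" for f
    unfolding Q_def by (rule Qop_X)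
  have Q1: "Q 1 = 0" by (metis Qc one_pCons)
  have LX: "LopG mm [:0,1:] = 1" using m0 by (simp add: LopG_c2)
  have QXq: "Q [:0,1:] = q" using QX[of "[:1:]"] Qc[of 1] m0 by (simp add: phiS_const del: pCons_one)
  have F0: "phiS mm (Q f) = 0" for f using sym[of 1 f] Q1 by simp
  have F1: "phiS mm ([:0,1:] * Q f) = phiS mm (f * q)" for f using sym[of "[:0,1:]" f] QXq by simp
  have F1': "phiS mm (pCons 0 (Q f)) = phiS mm (f * q)" for f using F1[of f] by simp
  have phq: "phiS mm q = 0" using F0[of "[:0,1:]"] QXq by simp
  have I: "phiS mm (f * q) + phiS mm p * phiS nn (LopG mm f) = 0" for f
    using F0[of "[:0,1:] * f"] unfolding QX by (simp add: phiS_add phiS_smult F1' phq mult.commute)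
  have P1: "P 1 = [:coeff (P 1) 0, coeff (P 1) 1:]" using deg poly_rep1[of "P 1"] by simp
  have b1: "coeff (P 1) 1 \<noteq> 0" using deg by (metis leading_coeff_0_iff)
  have "Q (P 1) = smult (coeff (P 1) 1) q"
  proof -
    have "P 1 = [:coeff (P 1) 0:] + smult (coeff (P 1) 1) [:0,1:]" by (subst P1) simp
    hence "Q (P 1) = Q [:coeff (P 1) 0:] + smult (coeff (P 1) 1) (Q [:0,1:])"
      by (metis Qadd Qsm)
    thus ?thesis using Qc QXq by simp
  qed
  hence "smult (coeff (P 1) 1) q = smult (c 1) (P 1)" using c by simp
  moreover have "q = smult (inverse (coeff (P 1) 1)) (smult (coeff (P 1) 1) q)" using b1 by simp
  ultimately have "q = smult (inverse (coeff (P 1) 1)) (smult (c 1) (P 1))" by simp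
  hence dq: "degree q \<le> 1" using deg degree_smult_le order_trans by metis
  define qa where "qa = coeff q 1"
  have qrep: "q = [:coeff q 0, qa:]" using poly_rep1[OF dq] qa_def by simp
  have "coeff q 0 + qa * mm 1 = 0" using phq m0 by (subst (asm) qrep) (simp add: phiS_pCons phiS_const)
  hence "coeff q 0 = - (qa * mm 1)" by simp
  hence qsm: "q = smult qa [:- mm 1, 1:]" by (subst qrep) simp
  have phiSq: "phiS mm (f * q) = qa * phiS mm (f * [:- mm 1, 1:])" for f
    by (simp only: qsm mult_smult_right phiS_smult)
  have gX: "phiS mm ([:0,1:] * [:- mm 1, 1:]) = \<gamma>"
    using m0 by (simp add: phiS_pCons phiS_const \<gamma>_def power2_eq_square numeral_2_eq_2)
  have A: "phiS mm ([:0,1:] * q) = qa * \<gamma>" by (simp only: phiSq gX)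
  have B: "phiS nn (LopG mm [:0,1:]) = 1" unfolding LX using n0 by (simp add: phiS_const one_pCons del: pCons_one)
  have cq: "qa * \<gamma> + phiS mm p = 0"
    using I[of "[:0,1:]"] unfolding A B by simp
  show ?thesis
  proof (cases "phiS mm p = 0")
    case False
    hence qa0: "qa \<noteq> 0" using cq by auto
    have "\<forall>f. phiS mm (f * [:- mm 1, 1:]) = \<gamma> * phiS nn (LopG mm f)"
    proof
      fix f
      have e: "qa * phiS mm (f * [:- mm 1, 1:]) + phiS mm p * phiS nn (LopG mm f) = 0"
        using I[of f] by (simp only: phiSq)
      have "qa * phiS mm (f * [:- mm 1, 1:]) = qa * (\<gamma> * phiS nn (LopG mm f))"
        by (rule aux1[OF e cq])
      thus "phiS mm (f * [:- mm 1, 1:]) = \<gamma> * phiS nn (LopG mm f)" using qa0 by simp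
    qed
    thus ?thesis unfolding \<gamma>_def by blast
  next
    case True
    hence "qa = 0" using cq gam \<gamma>_def by simp
    hence q0: "q = 0" using qsm by simp
    hence p0: "p \<noteq> 0" using pq by simp
    have Qp: "Q f = p * LopG nn (LopG mm f)" for f unfolding Q_def Qop_def q0 by simp
    have QX2: "Q [:0,0,1:] = p" unfolding Qp using m0 n0 by (simp add: LopG_c3 LopG_c2)
    have E: "phiS mm (f*p) + phiS nn (LopG mm f) * phiS mm (pCons 0 p) = 0" for f
    proof -
      have h1: "Q (pCons 0 f) = pCons 0 (Q f) + smult (phiS nn (LopG mm f)) p"
        using QX[of f] q0 by simp
      have h2: "Q (pCons 0 (pCons 0 f)) = pCons 0 (Q (pCons 0 f)) + smult (phiS nn (LopG mm (pCons 0 f))) p"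
        using QX[of "pCons 0 f"] q0 by simp
      have "phiS mm (pCons 0 (pCons 0 (Q f))) = phiS mm ([:0,0,1:] * Q f)" by simp
      also have "\<dots> = phiS mm (f * p)" using sym[of "[:0,0,1:]" f] QX2 by simp
      finally have h3: "phiS mm (pCons 0 (pCons 0 (Q f))) = phiS mm (f * p)" .
      have "0 = phiS mm (Q (pCons 0 (pCons 0 f)))" using F0 by simp
      also have "\<dots> = phiS mm (f * p) + phiS nn (LopG mm f) * phiS mm (pCons 0 p)
          + phiS nn (LopG mm (pCons 0 f)) * phiS mm p"
        unfolding h2 h1 by (simp only: pCons0_add pCons0_smult phiS_add phiS_smult h3)
      finally show ?thesis using True by simp
    qed
    have "phiS mm (pCons 0 p) = 0" using E[of "[:0,1:]"] B by simp
    hence phip: "phiS mm (f * p) = 0" for f using E[of f] by simp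
    have P2: "P 2 = [:coeff (P 2) 0, coeff (P 2) 1, coeff (P 2) 2:]" using deg poly_rep2[of "P 2"] by simp
    have e2: "coeff (P 2) 2 \<noteq> 0" using deg by (metis leading_coeff_0_iff)
    have "Q (P 2) = smult (coeff (P 2) 2) p" unfolding Qp using m0 n0
      by (subst P2) (simp add: LopG_c3 LopG_c2)
    hence "smult (coeff (P 2) 2) p = smult (c 2) (P 2)" using c by simp
    moreover have "p = smult (inverse (coeff (P 2) 2)) (smult (coeff (P 2) 2) p)" using e2 by simp
    ultimately have "p = smult (inverse (coeff (P 2) 2)) (smult (c 2) (P 2))" by simp
    hence dp: "degree p \<le> 2" using deg degree_smult_le order_trans by metis
    define a0 a1 a2 where "a0 = coeff p 0" "a1 = coeff p 1" "a2 = coeff p 2"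
    have prep: "p = [:a0, a1, a2:]" using poly_rep2[OF dp] a0_a1_a2_def by simp
    have pp0: "a0 + a1 * mm 1 + a2 * mm 2 = 0" using True m0
      by (subst (asm) prep) (simp add: phiS_pCons phiS_const numeral_2_eq_2 algebra_simps)
    have pp1: "a0 * mm 1 + a1 * mm 2 + a2 * mm 3 = 0" using \<open>phiS mm (pCons 0 p) = 0\<close> m0
      by (subst (asm) prep) (simp add: phiS_pCons phiS_const eval_nat_numeral algebra_simps)
    have a2: "a2 \<noteq> 0"
    proof
      assume a20: "a2 = 0"
      hence "a0 + a1 * mm 1 = 0" "a0 * mm 1 + a1 * mm 2 = 0" using pp0 pp1 by auto
      hence "a0 = - (a1 * mm 1)" "a0 * mm 1 + a1 * mm 2 = 0" by linarith+
      hence "a1 * (mm 2 - (mm 1)^2) = 0" by (simp add: algebra_simps power2_eq_square)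
      hence "a1 = 0" using gam by simp
      hence "a0 = 0" using \<open>a0 + a1 * mm 1 = 0\<close> by simp
      thus False using p0 prep a20 \<open>a1 = 0\<close> by simp
    qed
    have P3: "P 3 = [:coeff (P 3) 0, coeff (P 3) 1, coeff (P 3) 2, coeff (P 3) 3:]" using deg poly_rep3[of "P 3"] by simp
    have b3: "coeff (P 3) 3 \<noteq> 0" using deg by (metis leading_coeff_0_iff)
    have eq3: "Q (P 3) = smult (c 3) (P 3)" using c by simp
    have "p * LopG nn (LopG mm (P 3)) = smult (c 3) (P 3)" using eq3 unfolding Qp .
    hence eq3': "[:a0, a1, a2:] * LopG nn (LopG mm [:coeff (P 3) 0, coeff (P 3) 1, coeff (P 3) 2, coeff (P 3) 3:])
       = smult (c 3) [:coeff (P 3) 0, coeff (P 3) 1, coeff (P 3) 2, coeff (P 3) 3:]"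
      using prep P3 by metis
    have c33: "a2 * coeff (P 3) 3 = c 3 * coeff (P 3) 3"
      using arg_cong[OF eq3', of "\<lambda>r. coeff r 3"] m0 n0 by (simp add: LopG_c4 LopG_c3 eval_nat_numeral)
    hence c3: "c 3 = a2" using b3 by simp
    have "a1 * coeff (P 3) 3 + a2 * (coeff (P 3) 2 + coeff (P 3) 3 * mm 1 + coeff (P 3) 3 * nn 1) = c 3 * coeff (P 3) 2"
      using arg_cong[OF eq3', of "\<lambda>r. coeff r 2"] m0 n0 by (simp add: LopG_c4 LopG_c3 eval_nat_numeral algebra_simps)
    hence "coeff (P 3) 3 * (a1 + a2 * mm 1 + a2 * nn 1) = 0" unfolding c3 by (simp add: algebra_simps)
    hence H1: "a1 + a2 * mm 1 + a2 * nn 1 = 0" using b3 by simp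
    define b0 b1 b2 b3 b4 where "b0 = coeff (P 4) 0" "b1 = coeff (P 4) 1" "b2 = coeff (P 4) 2"
       "b3 = coeff (P 4) 3" "b4 = coeff (P 4) 4"
    have P4: "P 4 = [:b0, b1, b2, b3, b4:]" using deg poly_rep4[of "P 4"] b0_b1_b2_b3_b4_def by simp
    have b4: "b4 \<noteq> 0" using deg b0_b1_b2_b3_b4_def by (metis leading_coeff_0_iff)
    have "p * LopG nn (LopG mm (P 4)) = smult (c 4) (P 4)" using c unfolding Qp by simp
    hence eq4': "[:a0, a1, a2:] * LopG nn (LopG mm [:b0, b1, b2, b3, b4:]) = smult (c 4) [:b0, b1, b2, b3, b4:]"
      using prep P4 by metis
    have "a2 * b4 = c 4 * b4"
      using arg_cong[OF eq4', of "\<lambda>r. coeff r 4"] m0 n0 by (simp add: LopG_c5 LopG_c4 eval_nat_numeral)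
    hence c4: "c 4 = a2" using b4 by simp
    have E2: "a0 * b4 + a1 * (b3 + b4 * mm 1 + b4 * nn 1) + a2 * (b2 + b3 * mm 1 + b4 * mm 2 + (b3 + b4 * mm 1) * nn 1 + b4 * nn 2) = c 4 * b2"
      using arg_cong[OF eq4', of "\<lambda>r. coeff r 2"] m0 n0 by (simp add: LopG_c5 LopG_c4 eval_nat_numeral algebra_simps)
    have idt: "b4 * (a2 * (nn 2 - (nn 1)^2)) = (a0 * b4 + a1 * (b3 + b4 * mm 1 + b4 * nn 1) + a2 * (b2 + b3 * mm 1 + b4 * mm 2 + (b3 + b4 * mm 1) * nn 1 + b4 * nn 2) - a2 * b2)
        - b3 * (a1 + a2 * mm 1 + a2 * nn 1) - b4 * (a0 + a1 * mm 1 + a2 * mm 2) - b4 * nn 1 * (a1 + a2 * mm 1 + a2 * nn 1)"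
      by (simp add: algebra_simps power2_eq_square)
    have "b4 * (a2 * (nn 2 - (nn 1)^2)) = 0" unfolding idt using E2 c4 H1 pp0 by simp
    hence n2: "nn 2 = (nn 1)^2" using b4 a2 by simp
    define s where "s = nn 1"
    have Lp: "LopG mm p = [:a1 + a2 * mm 1, a2:]" using m0 by (subst prep) (simp add: LopG_c3)
    have Lps: "poly (LopG mm p) s = 0" unfolding Lp s_def using H1 by (simp add: algebra_simps)
    have degp2: "degree p = 2" using prep a2 by simp
    have fin: "phiS mm (f * [:- mm 1, 1:]) = \<gamma> * poly (LopG mm f) s" for f
    proof -
      define g r where "g = f div p" "r = f mod p"
      have fgr: "f = g * p + r" unfolding g_r_def by simp
      have "degree r \<le> 1"
      proof (cases "r = 0")
        case False
        hence "degree r < degree p" unfolding g_r_def using p0 degree_mod_less' by blast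
        thus ?thesis using degp2 by simp
      qed simp
      hence rrep: "r = [:coeff r 0, coeff r 1:]" by (rule poly_rep1)
      have "(g * p) * [:- mm 1, 1:] = (g * [:- mm 1, 1:]) * p" by (metis mult.assoc mult.commute)
      hence A1: "phiS mm ((g * p) * [:- mm 1, 1:]) = 0" using phip[of "g * [:- mm 1, 1:]"] by simp
      have A2: "phiS mm (r * [:- mm 1, 1:]) = \<gamma> * coeff r 1" using m0
        by (subst rrep) (simp add: phiS_pCons phiS_const \<gamma>_def numeral_2_eq_2 algebra_simps power2_eq_square)
      have A3: "poly (LopG mm (g * p)) s = 0" using LopG_mult_p[of mm p g] phip Lps by simp
      have A4: "poly (LopG mm r) s = coeff r 1" using m0 by (subst rrep) (simp add: LopG_c2)
      have "phiS mm (f * [:- mm 1, 1:]) = phiS mm ((g * p) * [:- mm 1, 1:]) + phiS mm (r * [:- mm 1, 1:])"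
        unfolding fgr by (simp only: distrib_right phiS_add)
      moreover have "poly (LopG mm f) s = poly (LopG mm (g * p)) s + poly (LopG mm r) s"
        unfolding fgr by (simp only: LopG_add poly_add)
      ultimately show ?thesis using A1 A2 A3 A4 by simp
    qed
    show ?thesis unfolding \<gamma>_def[symmetric] using fin n2 s_def by blast
  qed
qed

lemma ae_bound:
  assumes "sets M = sets borel" "compactly_supported M"
  shows "\<exists>R. AE x in M. \<bar>x\<bar> \<le> R"
proof -
  obtain K where K: "compact K" "K \<in> sets M" "emeasure M (space M - K) = 0"
    using assms(2) unfolding compactly_supported_def by blast
  obtain R where R: "\<forall>x\<in>K. norm x \<le> R" using compact_imp_bounded[OF K(1)] bounded_iff by metis
  have "space M - K \<in> null_sets M" using K by auto
  hence "AE x in M. x \<in> K" by (rule AE_I') auto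
  hence "AE x in M. \<bar>x\<bar> \<le> R" by eventually_elim (use R in auto)
  thus ?thesis by blast
qed

lemma meas_cont:
  fixes g :: "real \<Rightarrow> 'b::topological_space"
  assumes "sets M = sets borel" "continuous_on UNIV g"
  shows "g \<in> borel_measurable M"
  by (subst measurable_cong_sets[OF assms(1) refl]) (rule borel_measurable_continuous_onI[OF assms(2)])

lemma int_cont:
  fixes g :: "real \<Rightarrow> 'b::{banach,second_countable_topology}"
  assumes "prob_space M" "sets M = sets borel" "AE x in M. \<bar>x\<bar> \<le> R" "continuous_on UNIV g"
  shows "integrable M g"
proof -
  interpret prob_space M by fact
  have "compact (g ` {-R..R})"
    by (intro compact_continuous_image continuous_on_subset[OF assms(4)]) auto
  then obtain B where B: "\<forall>y \<in> g`{-R..R}. norm y \<le> B" using compact_imp_bounded bounded_iff by metis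
  have "AE x in M. norm (g x) \<le> B" using assms(3) by eventually_elim (use B in \<open>force simp: abs_le_iff\<close>)
  moreover have "g \<in> borel_measurable M"
    by (subst measurable_cong_sets[OF assms(2) refl]) (rule borel_measurable_continuous_onI[OF assms(4)])
  ultimately show ?thesis by (rule integrable_const_bound)
qed

lemma phiS_integral:
  assumes "prob_space M" "sets M = sets borel" "AE x in M. \<bar>x\<bar> \<le> R"
  shows "phiS (moment M) f = (\<integral>x. poly f x \<partial>M)"
proof -
  have int: "integrable M (\<lambda>x. x ^ k)" for k
    by (rule int_cont[OF assms]) (intro continuous_intros)
  have "(\<integral>x. poly f x \<partial>M) = (\<integral>x. (\<Sum>k\<le>degree f. coeff f k * x ^ k) \<partial>M)"
    by (simp add: poly_altdef)
  also have "\<dots> = (\<Sum>k\<le>degree f. coeff f k * moment M k)"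
    using int by (simp add: moment_def)
  finally show ?thesis unfolding phiS_def by simp
qed

lemma moment0: "prob_space M \<Longrightarrow> moment M 0 = 1"
  unfolding moment_def by (simp add: prob_space.prob_space)

lemma ae_point_eq_return:
  assumes "prob_space M" "sets M = sets borel" "AE x in M. x = c"
  shows "M = return borel c"
proof (rule measure_eqI)
  interpret prob_space M by fact
  show "sets M = sets (return borel c)" using assms(2) by simp
  fix A assume A: "A \<in> sets M"
  have sp: "space M = UNIV" using sets_eq_imp_space_eq[OF assms(2)] by simp
  show "emeasure M A = emeasure (return borel c) A"
  proof (cases "c \<in> A")
    case True
    have "AE x in M. x \<in> A \<longleftrightarrow> x \<in> space M" using assms(3) by eventually_elim (use True sp in auto)
    hence "emeasure M A = emeasure M (space M)" using A by (intro emeasure_eq_AE) auto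
    thus ?thesis using True A assms(2) by (simp add: emeasure_space_1)
  next
    case False
    have "AE x in M. x \<in> A \<longleftrightarrow> x \<in> {}" using assms(3) by eventually_elim (use False in auto)
    hence "emeasure M A = emeasure M {}" using A by (intro emeasure_eq_AE) auto
    thus ?thesis using False A assms(2) by simp
  qed
qed

lemma sq_poly: "poly [:c^2, -2*c, 1:] x = (x - c)^2" for c x :: real
  by (simp add: power2_eq_square algebra_simps)

lemma var_zero_AE:
  fixes M :: "real measure"
  assumes "prob_space M" "sets M = sets borel" "AE x in M. \<bar>x\<bar> \<le> R"
    and "(\<integral>x. (x - c)^2 \<partial>M) = 0"
  shows "AE x in M. x = c"
proof -
  have "integrable M (\<lambda>x. (x - c)^2)" by (rule int_cont[OF assms(1-3)]) (intro continuous_intros)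
  hence "AE x in M. (x - c)^2 = 0" using assms(4) integral_nonneg_eq_0_iff_AE[of M "\<lambda>x. (x - c)^2"] by auto
  thus ?thesis by eventually_elim simp
qed

lemma bridge:
  fixes M N :: "real measure" and p q :: "real poly" and P :: "nat \<Rightarrow> real poly"
  assumes "prob_space M" "sets M = sets borel" "compactly_supported M"
    and "prob_space N" "sets N = sets borel" "compactly_supported N"
    and "\<forall>a. M \<noteq> return borel a"
    and "p \<noteq> 0 \<or> q \<noteq> 0"
    and "\<forall>n. P n \<noteq> 0 \<and> degree (P n) = n"
    and "\<forall>n. \<exists>c::real. p * Lop N (Lop M (P n)) + q * Lop M (P n) = smult c (P n)"
    and "\<forall>n m. n \<noteq> m \<longrightarrow> (\<integral>x. poly (P n) x * poly (P m) x \<partial>M) = 0"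
  shows "moment M 2 - (moment M 1)^2 > 0 \<and>
    (\<forall>f. (\<integral>x. (x - moment M 1) * poly f x \<partial>M) = (moment M 2 - (moment M 1)^2) * (\<integral>y. poly (Lop M f) y \<partial>N))"
proof -
  obtain RM where RM: "AE x in M. \<bar>x\<bar> \<le> RM" using ae_bound assms(2,3) by blast
  obtain RN where RN: "AE x in N. \<bar>x\<bar> \<le> RN" using ae_bound assms(5,6) by blast
  define mm nn where "mm = moment M" "nn = moment N"
  define \<gamma> where "\<gamma> = mm 2 - (mm 1)^2"
  have phM: "phiS mm f = (\<integral>x. poly f x \<partial>M)" for f unfolding mm_nn_def by (rule phiS_integral[OF assms(1,2) RM])
  have phN: "phiS nn f = (\<integral>x. poly f x \<partial>N)" for f unfolding mm_nn_def by (rule phiS_integral[OF assms(4,5) RN])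
  have m0: "mm 0 = 1" "nn 0 = 1" unfolding mm_nn_def using moment0 assms(1,4) by auto
  have var: "(\<integral>x. (x - c)^2 \<partial>M) = mm 2 - 2 * c * mm 1 + c^2" for c
  proof -
    have "(\<integral>x. (x - c)^2 \<partial>M) = phiS mm [:c^2, -2*c, 1:]" unfolding phM sq_poly ..
    also have "\<dots> = mm 2 - 2 * c * mm 1 + c^2" using m0
      by (simp add: phiS_pCons phiS_const numeral_2_eq_2 algebra_simps)
    finally show ?thesis .
  qed
  have gpos: "\<gamma> > 0"
  proof -
    have "(\<integral>x. (x - mm 1)^2 \<partial>M) = \<gamma>" unfolding var \<gamma>_def by (simp add: power2_eq_square)
    moreover have "(\<integral>x. (x - mm 1)^2 \<partial>M) \<ge> 0" by simp
    moreover have "(\<integral>x. (x - mm 1)^2 \<partial>M) \<noteq> 0"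
    proof
      assume "(\<integral>x. (x - mm 1)^2 \<partial>M) = 0"
      hence "AE x in M. x = mm 1" by (rule var_zero_AE[OF assms(1,2) RM])
      hence "M = return borel (mm 1)" by (rule ae_point_eq_return[OF assms(1,2)])
      thus False using assms(7) by blast
    qed
    ultimately show ?thesis by linarith
  qed
  have orth: "\<forall>k j. k \<noteq> j \<longrightarrow> phiS mm (P k * P j) = 0"
    using assms(11) by (simp add: phM)
  have eig: "\<forall>k. \<exists>c. Qop mm nn p q (P k) = smult c (P k)"
    using assms(10) unfolding Qop_def mm_nn_def Lop_LopG by blast
  have main: "(\<forall>f. phiS mm (f * [:- mm 1, 1:]) = \<gamma> * phiS nn (LopG mm f))
    \<or> (\<exists>s. nn 1 = s \<and> nn 2 = s^2 \<and>
         (\<forall>f. phiS mm (f * [:- mm 1, 1:]) = \<gamma> * poly (LopG mm f) s))"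
    unfolding \<gamma>_def by (rule alg_main[OF m0 assms(9) eig orth assms(8)]) (use gpos \<gamma>_def in simp)
  have lhs: "(\<integral>x. (x - mm 1) * poly f x \<partial>M) = phiS mm (f * [:- mm 1, 1:])" for f
  proof -
    have e: "(\<lambda>x. (x - mm 1) * poly f x) = poly (f * [:- mm 1, 1:])" by (rule ext) (simp add: algebra_simps)
    show ?thesis unfolding phM e ..
  qed
  have "\<forall>f. (\<integral>x. (x - mm 1) * poly f x \<partial>M) = \<gamma> * (\<integral>y. poly (Lop M f) y \<partial>N)"
    using main
  proof
    assume h: "\<forall>f. phiS mm (f * [:- mm 1, 1:]) = \<gamma> * phiS nn (LopG mm f)"
    show ?thesis
    proof
      fix f
      have "(\<integral>x. (x - mm 1) * poly f x \<partial>M) = \<gamma> * phiS nn (LopG mm f)" using h lhs by simp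
      thus "(\<integral>x. (x - mm 1) * poly f x \<partial>M) = \<gamma> * (\<integral>y. poly (Lop M f) y \<partial>N)"
        using phN[of "LopG mm f"] Lop_LopG[of M f] mm_nn_def by simp
    qed
  next
    assume "\<exists>s. nn 1 = s \<and> nn 2 = s^2 \<and> (\<forall>f. phiS mm (f * [:- mm 1, 1:]) = \<gamma> * poly (LopG mm f) s)"
    then obtain t where s: "nn 1 = t" "nn 2 = t^2" "\<forall>f. phiS mm (f * [:- mm 1, 1:]) = \<gamma> * poly (LopG mm f) t"
      by blast
    have "(\<integral>x. (x - t)^2 \<partial>N) = phiS nn [:t^2, -2*t, 1:]" unfolding phN sq_poly ..
    also have "\<dots> = 0" using m0 s
      by (simp add: phiS_pCons phiS_const numeral_2_eq_2 algebra_simps power2_eq_square)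
    finally have "AE x in N. x = t" by (rule var_zero_AE[OF assms(4,5) RN])
    hence ev: "(\<integral>y. poly g y \<partial>N) = poly g t" for g
    proof -
      assume "AE x in N. x = t"
      hence "(\<integral>y. poly g y \<partial>N) = (\<integral>y. poly g t \<partial>N)" by (intro integral_cong_AE meas_cont[OF assms(5)]) (auto elim: AE_mp intro: continuous_intros)
      thus ?thesis using prob_space.prob_space[OF assms(4)] by simp
    qed
    show ?thesis
    proof
      fix f
      have "(\<integral>x. (x - mm 1) * poly f x \<partial>M) = \<gamma> * poly (LopG mm f) t" using s(3) lhs by simp
      thus "(\<integral>x. (x - mm 1) * poly f x \<partial>M) = \<gamma> * (\<integral>y. poly (Lop M f) y \<partial>N)"
        using ev[of "LopG mm f"] Lop_LopG[of M f] mm_nn_def by simp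
    qed
  qed
  thus ?thesis using gpos unfolding \<gamma>_def mm_nn_def by simp
qed

definition dd :: "real poly \<Rightarrow> real \<Rightarrow> real \<Rightarrow> real" where
  "dd f s t = poly (LopG (\<lambda>k. t ^ k) f) s"

lemma poly_LopG: "poly (LopG m f) s = (\<Sum>k\<le>degree f. coeff f k * (\<Sum>j<k. m (k - 1 - j) * s ^ j))"
  unfolding LopG_def by (simp add: poly_sum poly_monom)

lemma phiS_pow: "phiS (\<lambda>k. t ^ k) f = poly f t"
  unfolding phiS_def by (simp add: poly_altdef)

lemma dd_add: "dd (f + g) s t = dd f s t + dd g s t" unfolding dd_def by (simp add: LopG_add)
lemma dd_smult: "dd (smult c f) s t = c * dd f s t" unfolding dd_def by (simp add: LopG_smult)
lemma dd_const: "dd [:c:] s t = 0" unfolding dd_def by simp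
lemma dd_sum: "dd (\<Sum>i\<in>A. f i) s t = (\<Sum>i\<in>A. dd (f i) s t)"
  unfolding dd_def by (simp add: LopG_sum poly_sum)
lemma dd_pCons: "dd (pCons a f) s t = s * dd f s t + poly f t"
  unfolding dd_def by (simp add: LopG_pCons phiS_pow)

lemma dd_mult: "dd (g * h) s t = poly g s * dd h s t + poly h t * dd g s t"
proof (induction g)
  case 0 then show ?case by (simp add: dd_def)
next
  case (pCons a g)
  have "pCons a g * h = smult a h + pCons 0 (g * h)" by simp
  hence "dd (pCons a g * h) s t = a * dd h s t + (s * dd (g * h) s t + poly (g * h) t)"
    by (simp only: dd_add dd_smult dd_pCons)
  then show ?case using pCons.IH by (simp add: dd_pCons algebra_simps)
qed

lemma dd_power: "dd (g ^ Suc k) s t = dd g s t * (\<Sum>i\<le>k. poly g s ^ i * poly g t ^ (k - i))"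
proof (induction k)
  case 0 then show ?case by simp
next
  case (Suc k)
  have "dd (g ^ Suc (Suc k)) s t = poly g s * dd (g ^ Suc k) s t + poly g t ^ Suc k * dd g s t"
    by (subst power_Suc[of g "Suc k"], subst dd_mult) (simp only: poly_power)
  also have "\<dots> = dd g s t * (poly g t ^ Suc k + (\<Sum>i\<le>k. poly g s ^ Suc i * poly g t ^ (k - i)))"
    unfolding Suc.IH by (simp add: sum_distrib_left algebra_simps)
  also have "poly g t ^ Suc k + (\<Sum>i\<le>k. poly g s ^ Suc i * poly g t ^ (k - i))
     = (\<Sum>i\<le>Suc k. poly g s ^ i * poly g t ^ (Suc k - i))"
    by (subst sum.atMost_Suc_shift) simp
  finally show ?case .
qed

lemma Lop_integral:
  fixes M :: "real measure"
  assumes "prob_space M" "sets M = sets borel" "AE x in M. \<bar>x\<bar> \<le> R"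
  shows "poly (Lop M f) s = (\<integral>t. dd f s t \<partial>M)"
proof -
  have int: "integrable M (\<lambda>x. x ^ k)" for k
    by (rule int_cont[OF assms]) (intro continuous_intros)
  show ?thesis
    unfolding dd_def Lop_LopG poly_LopG moment_def using int
    by (simp add: mult.assoc)
qed

definition Kc :: "real \<Rightarrow> real \<Rightarrow> real \<Rightarrow> real" where
  "Kc a b R = (R + \<bar>a\<bar>)^2 + b^2 + 1"
definition uu :: "real \<Rightarrow> real \<Rightarrow> real \<Rightarrow> real \<Rightarrow> real" where
  "uu a b R x = 1 - ((x - a)^2 + b^2) / Kc a b R"
definition UU :: "real \<Rightarrow> real \<Rightarrow> real \<Rightarrow> real poly" where
  "UU a b R = [:1 - (a^2 + b^2) / Kc a b R, 2 * a / Kc a b R, -1 / Kc a b R:]"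
definition Sp :: "real \<Rightarrow> real \<Rightarrow> real \<Rightarrow> nat \<Rightarrow> real poly" where
  "Sp a b R n = (\<Sum>k\<le>n. UU a b R ^ k)"
definition f1 :: "real \<Rightarrow> real \<Rightarrow> real \<Rightarrow> nat \<Rightarrow> real poly" where
  "f1 a b R n = smult (1 / Kc a b R) ([:a, -1:] * Sp a b R n)"
definition f2 :: "real \<Rightarrow> real \<Rightarrow> real \<Rightarrow> nat \<Rightarrow> real poly" where
  "f2 a b R n = smult (- b / Kc a b R) (Sp a b R n)"

lemma Kc_pos: "Kc a b R > 0"
  unfolding Kc_def by (simp add: add_nonneg_pos)

lemma poly_UU: "poly (UU a b R) x = uu a b R x"
  using Kc_pos[of a b R] unfolding UU_def uu_def
  by (simp add: field_simps power2_eq_square)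

lemma uu_bounds:
  assumes "b \<noteq> 0" "\<bar>x\<bar> \<le> R"
  shows "0 \<le> uu a b R x" "uu a b R x \<le> 1 - b^2 / Kc a b R" "1 - b^2 / Kc a b R < 1"
proof -
  have K: "Kc a b R > 0" by (rule Kc_pos)
  have "\<bar>x - a\<bar> \<le> R + \<bar>a\<bar>" using assms(2) by linarith
  hence "(x - a)^2 \<le> (R + \<bar>a\<bar>)^2" by (metis abs_ge_zero power2_abs power_mono)
  hence "(x - a)^2 + b^2 \<le> Kc a b R" unfolding Kc_def by linarith
  hence "((x - a)^2 + b^2) / Kc a b R \<le> 1" using K by simp
  thus "0 \<le> uu a b R x" unfolding uu_def by simp
  have "b^2 / Kc a b R \<le> ((x - a)^2 + b^2) / Kc a b R" using K by (simp add: divide_right_mono)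
  thus "uu a b R x \<le> 1 - b^2 / Kc a b R" unfolding uu_def by simp
  have "b^2 > 0" using assms(1) by simp
  thus "1 - b^2 / Kc a b R < 1" using K by simp
qed

lemma dd_0: "dd 0 s t = 0" unfolding dd_def by simp

lemma dd_UU: "dd (UU a b R) s t = - (s + t - 2 * a) / Kc a b R"
  using Kc_pos[of a b R] unfolding UU_def by (simp add: dd_pCons dd_const dd_0 field_simps)

lemma poly_Sp: "poly (Sp a b R n) x = (\<Sum>k\<le>n. uu a b R x ^ k)"
  unfolding Sp_def by (simp add: poly_sum poly_power poly_UU)

lemma dd_Sp: "dd (Sp a b R n) s t = dd (UU a b R) s t *
   (\<Sum>k<n. \<Sum>i\<le>k. uu a b R s ^ i * uu a b R t ^ (k - i))"
proof -
  have "dd (Sp a b R n) s t = (\<Sum>k\<le>n. dd (UU a b R ^ k) s t)" unfolding Sp_def by (rule dd_sum)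
  also have "\<dots> = dd (UU a b R ^ 0) s t + (\<Sum>k<n. dd (UU a b R ^ Suc k) s t)"
    by (rule sum.atMost_shift)
  also have "dd (UU a b R ^ 0) s t = 0" using dd_const[of 1 s t] by (simp add: one_pCons)
  finally show ?thesis by (simp only: dd_power poly_UU sum_distrib_left)
qed

lemma dd_f1: "dd (f1 a b R n) s t = ((a - s) * dd (Sp a b R n) s t - poly (Sp a b R n) t) / Kc a b R"
proof -
  have "dd [:a, -1:] s t = -1" by (simp add: dd_pCons dd_const dd_0)
  thus ?thesis unfolding f1_def dd_smult dd_mult by simp
qed

lemma dd_f2: "dd (f2 a b R n) s t = - b * dd (Sp a b R n) s t / Kc a b R"
  by (simp only: f2_def dd_smult) simp

lemma poly_f1: "poly (f1 a b R n) x = (a - x) * poly (Sp a b R n) x / Kc a b R"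
  unfolding f1_def by (simp add: algebra_simps diff_divide_distrib)
lemma poly_f2: "poly (f2 a b R n) x = - b * poly (Sp a b R n) x / Kc a b R"
  unfolding f2_def by simp

lemma geo_lim:
  assumes "0 \<le> (x::real)" "x < 1"
  shows "(\<lambda>n. \<Sum>k\<le>n. x ^ k) \<longlonglongrightarrow> 1 / (1 - x)" "(\<Sum>k\<le>n. x ^ k) \<le> 1 / (1 - x)"
proof -
  have nx: "norm x < 1" using assms by simp
  have "(\<lambda>n. \<Sum>k<n. x ^ k) \<longlonglongrightarrow> 1 / (1 - x)" using geometric_sums[OF nx] unfolding sums_def .
  hence "(\<lambda>n. \<Sum>k<Suc n. x ^ k) \<longlonglongrightarrow> 1 / (1 - x)" by (rule LIMSEQ_Suc)
  thus "(\<lambda>n. \<Sum>k\<le>n. x ^ k) \<longlonglongrightarrow> 1 / (1 - x)" by (simp add: lessThan_Suc_atMost)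
  have "(\<Sum>k\<le>n. x ^ k) \<le> (\<Sum>k. x ^ k)"
    by (rule sum_le_suminf[OF summable_geometric[OF nx]]) (use assms in auto)
  thus "(\<Sum>k\<le>n. x ^ k) \<le> 1 / (1 - x)" using suminf_geometric[OF nx] by simp
qed

lemma cauchy_lim:
  assumes "0 \<le> (x::real)" "x < 1" "0 \<le> (y::real)" "y < 1"
  shows "(\<lambda>n. \<Sum>k<n. \<Sum>i\<le>k. x ^ i * y ^ (k - i)) \<longlonglongrightarrow> 1 / ((1 - x) * (1 - y))"
    "(\<Sum>k<n. \<Sum>i\<le>k. x ^ i * y ^ (k - i)) \<le> 1 / ((1 - x) * (1 - y))"
proof -
  have nx: "norm x < 1" "norm y < 1" using assms by auto
  have s: "(\<lambda>k. \<Sum>i\<le>k. x ^ i * y ^ (k - i)) sums ((\<Sum>k. x ^ k) * (\<Sum>k. y ^ k))"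
  proof (rule Cauchy_product_sums)
    show "summable (\<lambda>k. norm (x ^ k))" using summable_geometric[OF nx(1)] assms by (simp add: norm_power)
    show "summable (\<lambda>k. norm (y ^ k))" using summable_geometric[OF nx(2)] assms by (simp add: norm_power)
  qed
  have e: "(\<Sum>k. x ^ k) * (\<Sum>k. y ^ k) = 1 / ((1 - x) * (1 - y))"
    using suminf_geometric[OF nx(1)] suminf_geometric[OF nx(2)] by simp
  show "(\<lambda>n. \<Sum>k<n. \<Sum>i\<le>k. x ^ i * y ^ (k - i)) \<longlonglongrightarrow> 1 / ((1 - x) * (1 - y))"
    using s unfolding sums_def e .
  show "(\<Sum>k<n. \<Sum>i\<le>k. x ^ i * y ^ (k - i)) \<le> 1 / ((1 - x) * (1 - y))"
    unfolding e[symmetric] sums_unique[OF s]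
    by (rule sum_le_suminf[OF sums_summable[OF s]]) (use assms in \<open>auto intro!: sum_nonneg\<close>)
qed

lemma zD: "(z - complex_of_real x) * (cnj z - complex_of_real x) = complex_of_real ((x - Re z)^2 + (Im z)^2)"
  by (simp add: complex_eq_iff power2_eq_square algebra_simps)

lemma z_ne: "Im z \<noteq> 0 \<Longrightarrow> z - complex_of_real x \<noteq> 0"
  by (metis Im_complex_of_real cancel_comm_monoid_add_class.diff_cancel diff_zero right_minus_eq)

lemma cz_ne: "Im z \<noteq> 0 \<Longrightarrow> cnj z - complex_of_real x \<noteq> 0"
  by (metis complex_cnj_complex_of_real complex_cnj_diff complex_cnj_zero_iff z_ne)

lemma D_pos: "Im z \<noteq> 0 \<Longrightarrow> (x - Re z)^2 + (Im z)^2 > 0"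
  by (simp add: add_nonneg_pos)

lemma one_minus_uu: "1 - uu a b R x = ((x - a)^2 + b^2) / Kc a b R"
  unfolding uu_def by simp

lemma C1:
  assumes "Im z \<noteq> 0"
  shows "(cnj z - complex_of_real x) / complex_of_real (Kc (Re z) (Im z) R)
      * complex_of_real (1 / (1 - uu (Re z) (Im z) R x)) = 1 / (z - complex_of_real x)"
proof -
  define D where "D = (x - Re z)^2 + (Im z)^2"
  have D: "D > 0" unfolding D_def using D_pos[OF assms] .
  have K: "Kc (Re z) (Im z) R > 0" by (rule Kc_pos)
  have "complex_of_real (1 / (1 - uu (Re z) (Im z) R x)) = complex_of_real (Kc (Re z) (Im z) R) / complex_of_real D"
    unfolding one_minus_uu D_def by simp
  hence "(cnj z - complex_of_real x) / complex_of_real (Kc (Re z) (Im z) R)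
      * complex_of_real (1 / (1 - uu (Re z) (Im z) R x)) = (cnj z - complex_of_real x) / complex_of_real D"
    using K by simp
  also have "\<dots> = (cnj z - complex_of_real x) / ((z - complex_of_real x) * (cnj z - complex_of_real x))"
    unfolding D_def zD ..
  also have "\<dots> = 1 / (z - complex_of_real x)" using cz_ne[OF assms] by simp
  finally show ?thesis .
qed

lemma frac_cancel: "A \<noteq> 0 \<Longrightarrow> B \<noteq> 0 \<Longrightarrow> C \<noteq> 0 \<Longrightarrow> D \<noteq> 0 \<Longrightarrow>
   (A*B)/((C*A)*(D*B)) = 1/(C*D::complex)"
  by (simp add: field_simps)

lemma C2:
  assumes "Im z \<noteq> 0"
  shows "((cnj z - complex_of_real s) * complex_of_real (dd (UU (Re z) (Im z) R) s t
           * (1 / ((1 - uu (Re z) (Im z) R s) * (1 - uu (Re z) (Im z) R t))))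
         - complex_of_real (1 / (1 - uu (Re z) (Im z) R t))) / complex_of_real (Kc (Re z) (Im z) R)
      = 1 / ((z - complex_of_real s) * (z - complex_of_real t))"
proof -
  define a b where "a = Re z" "b = Im z"
  define K where "K = Kc a b R"
  define Ds Dt where "Ds = (s - a)^2 + b^2" "Dt = (t - a)^2 + b^2"
  have K: "K > 0" unfolding K_def by (rule Kc_pos)
  have Ds: "Ds > 0" "Dt > 0" unfolding Ds_Dt_def a_b_def using D_pos[OF assms] by auto
  have zs: "(z - complex_of_real s) * (cnj z - complex_of_real s) = complex_of_real Ds"
    unfolding Ds_Dt_def a_b_def by (rule zD)
  have zt: "(z - complex_of_real t) * (cnj z - complex_of_real t) = complex_of_real Dt"
    unfolding Ds_Dt_def a_b_def by (rule zD)
  have cz: "cnj z = 2 * complex_of_real a - z" unfolding a_b_def by (simp add: complex_eq_iff)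
  have ne: "z - complex_of_real s \<noteq> 0" "z - complex_of_real t \<noteq> 0"
    "cnj z - complex_of_real s \<noteq> 0" "cnj z - complex_of_real t \<noteq> 0"
    using z_ne[OF assms] cz_ne[OF assms] by auto
  have r1: "dd (UU a b R) s t * (1 / ((1 - uu a b R s) * (1 - uu a b R t))) = - (s + t - 2*a) * K / (Ds * Dt)"
    unfolding dd_UU one_minus_uu K_def[symmetric] Ds_Dt_def[symmetric] using K Ds by (simp add: field_simps)
  have r2: "1 / (1 - uu a b R t) = K / Dt"
    unfolding one_minus_uu K_def[symmetric] Ds_Dt_def[symmetric] using K Ds by (simp add: field_simps)
  have cne: "complex_of_real K \<noteq> 0" "complex_of_real Ds \<noteq> 0" "complex_of_real Dt \<noteq> 0" using K Ds by auto
  have L: "((cnj z - complex_of_real s) * complex_of_real (dd (UU a b R) s t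
           * (1 / ((1 - uu a b R s) * (1 - uu a b R t))))
         - complex_of_real (1 / (1 - uu a b R t))) / complex_of_real K
       = (- (cnj z - complex_of_real s) * complex_of_real (s + t - 2 * a) - complex_of_real Ds)
          / (complex_of_real Ds * complex_of_real Dt)"
    unfolding r1 r2 using cne by (simp add: field_simps)
  have "(- (cnj z - complex_of_real s) * complex_of_real (s + t - 2 * a) - complex_of_real Ds)
      = (cnj z - complex_of_real s) * (cnj z - complex_of_real t)"
    unfolding zs[symmetric] cz by (simp add: algebra_simps)
  hence "(- (cnj z - complex_of_real s) * complex_of_real (s + t - 2 * a) - complex_of_real Ds)
          / (complex_of_real Ds * complex_of_real Dt)
      = ((cnj z - complex_of_real s) * (cnj z - complex_of_real t)) /
        (((z - complex_of_real s) * (cnj z - complex_of_real s)) * ((z - complex_of_real t) * (cnj z - complex_of_real t)))"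
    unfolding zs zt by simp
  also have "\<dots> = 1 / ((z - complex_of_real s) * (z - complex_of_real t))"
    by (rule frac_cancel) (use ne in auto)
  finally have "(- (cnj z - complex_of_real s) * complex_of_real (s + t - 2 * a) - complex_of_real Ds)
          / (complex_of_real Ds * complex_of_real Dt)
      = 1 / ((z - complex_of_real s) * (z - complex_of_real t))" .
  thus ?thesis using L unfolding a_b_def K_def by simp
qed

definition FF :: "complex \<Rightarrow> real \<Rightarrow> nat \<Rightarrow> real \<Rightarrow> complex" where
  "FF z R n x = complex_of_real (poly (f1 (Re z) (Im z) R n) x) + \<i> * complex_of_real (poly (f2 (Re z) (Im z) R n) x)"
definition XX :: "complex \<Rightarrow> real \<Rightarrow> nat \<Rightarrow> real \<Rightarrow> real \<Rightarrow> complex" where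
  "XX z R n s t = complex_of_real (dd (f1 (Re z) (Im z) R n) s t) + \<i> * complex_of_real (dd (f2 (Re z) (Im z) R n) s t)"

lemma cnj_decomp: "cnj z = complex_of_real (Re z) - \<i> * complex_of_real (Im z)"
  by (simp add: complex_eq_iff)

lemma FF_closed: "FF z R n x = (cnj z - complex_of_real x) / complex_of_real (Kc (Re z) (Im z) R)
    * complex_of_real (poly (Sp (Re z) (Im z) R n) x)"
proof -
  have "complex_of_real (Kc (Re z) (Im z) R) \<noteq> 0" using Kc_pos[of "Re z" "Im z" R] by simp
  thus ?thesis unfolding FF_def poly_f1 poly_f2 cnj_decomp by (simp add: field_simps)
qed

lemma XX_closed: "XX z R n s t = ((cnj z - complex_of_real s) * complex_of_real (dd (Sp (Re z) (Im z) R n) s t)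
    - complex_of_real (poly (Sp (Re z) (Im z) R n) t)) / complex_of_real (Kc (Re z) (Im z) R)"
proof -
  have "complex_of_real (Kc (Re z) (Im z) R) \<noteq> 0" using Kc_pos[of "Re z" "Im z" R] by simp
  thus ?thesis unfolding XX_def dd_f1 dd_f2 cnj_decomp by (simp add: field_simps)
qed

lemma inv_bound:
  fixes u \<rho> :: real
  assumes "0 \<le> u" "u \<le> \<rho>" "\<rho> < 1"
  shows "1 / (1 - u) \<le> 1 / (1 - \<rho>)" "0 < 1 / (1 - u)" "u < 1"
proof -
  have h: "0 < 1 - \<rho>" "1 - \<rho> \<le> 1 - u" using assms by auto
  show "1 / (1 - u) \<le> 1 / (1 - \<rho>)" using h by (intro divide_left_mono) (auto intro: mult_pos_pos)
  show "0 < 1 / (1 - u)" "u < 1" using h by auto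
qed

lemma FF_lim:
  assumes "Im z \<noteq> 0" "\<bar>x\<bar> \<le> R"
  shows "(\<lambda>n. FF z R n x) \<longlonglongrightarrow> 1 / (z - complex_of_real x)"
proof -
  note ub = uu_bounds[OF assms(1,2), of "Re z"]
  have "(\<lambda>n. complex_of_real (poly (Sp (Re z) (Im z) R n) x)) \<longlonglongrightarrow>
      complex_of_real (1 / (1 - uu (Re z) (Im z) R x))"
    unfolding poly_Sp by (intro tendsto_of_real geo_lim) (use ub in auto)
  hence "(\<lambda>n. FF z R n x) \<longlonglongrightarrow> (cnj z - complex_of_real x) / complex_of_real (Kc (Re z) (Im z) R)
      * complex_of_real (1 / (1 - uu (Re z) (Im z) R x))"
    unfolding FF_closed by (intro tendsto_mult tendsto_const)
  thus ?thesis unfolding C1[OF assms(1)] .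
qed

lemma FF_bound:
  assumes "Im z \<noteq> 0" "\<bar>x\<bar> \<le> R"
  shows "norm (FF z R n x) \<le> (cmod z + R) / Kc (Re z) (Im z) R * (1 / (1 - (1 - (Im z)^2 / Kc (Re z) (Im z) R)))"
proof -
  define K \<rho> u where "K = Kc (Re z) (Im z) R" "\<rho> = 1 - (Im z)^2 / K" "u = uu (Re z) (Im z) R x"
  have K: "K > 0" unfolding K_\<rho>_u_def by (rule Kc_pos)
  have ub: "0 \<le> u" "u \<le> \<rho>" "\<rho> < 1" using uu_bounds[OF assms(1,2), of "Re z"] unfolding K_\<rho>_u_def by auto
  have S: "0 \<le> poly (Sp (Re z) (Im z) R n) x" "poly (Sp (Re z) (Im z) R n) x \<le> 1 / (1 - \<rho>)"
    unfolding poly_Sp using ub geo_lim(2)[of u n] inv_bound[OF ub] unfolding K_\<rho>_u_def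
    by (auto intro!: sum_nonneg)
  have c: "cmod (cnj z - complex_of_real x) \<le> cmod z + R"
    using norm_triangle_ineq4[of "cnj z" "complex_of_real x"] assms(2) by simp
  have "norm (FF z R n x) = cmod (cnj z - complex_of_real x) / K * poly (Sp (Re z) (Im z) R n) x"
    unfolding FF_closed K_\<rho>_u_def[symmetric] using K S by (simp add: norm_mult norm_divide)
  also have "\<dots> \<le> (cmod z + R) / K * (1 / (1 - \<rho>))"
    using c S K assms(2) by (intro mult_mono divide_right_mono) auto
  finally show ?thesis unfolding K_\<rho>_u_def .
qed

lemma XX_lim:
  assumes "Im z \<noteq> 0" "\<bar>s\<bar> \<le> R" "\<bar>t\<bar> \<le> R"
  shows "(\<lambda>n. XX z R n s t) \<longlonglongrightarrow> 1 / ((z - complex_of_real s) * (z - complex_of_real t))"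
proof -
  note us = uu_bounds[OF assms(1,2), of "Re z"] and ut = uu_bounds[OF assms(1,3), of "Re z"]
  have T: "(\<lambda>n. dd (Sp (Re z) (Im z) R n) s t) \<longlonglongrightarrow> dd (UU (Re z) (Im z) R) s t
     * (1 / ((1 - uu (Re z) (Im z) R s) * (1 - uu (Re z) (Im z) R t)))"
    unfolding dd_Sp by (intro tendsto_mult tendsto_const cauchy_lim) (use us ut in auto)
  have S: "(\<lambda>n. poly (Sp (Re z) (Im z) R n) t) \<longlonglongrightarrow> 1 / (1 - uu (Re z) (Im z) R t)"
    unfolding poly_Sp by (intro geo_lim) (use ut in auto)
  have "(\<lambda>n. XX z R n s t) \<longlonglongrightarrow> ((cnj z - complex_of_real s) * complex_of_real (dd (UU (Re z) (Im z) R) s t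
           * (1 / ((1 - uu (Re z) (Im z) R s) * (1 - uu (Re z) (Im z) R t))))
         - complex_of_real (1 / (1 - uu (Re z) (Im z) R t))) / complex_of_real (Kc (Re z) (Im z) R)"
    unfolding XX_closed by (intro tendsto_intros T S) (use Kc_pos[of "Re z" "Im z" R] in simp)
  thus ?thesis unfolding C2[OF assms(1)] .
qed

lemma XX_bound:
  assumes "Im z \<noteq> 0" "\<bar>s\<bar> \<le> R" "\<bar>t\<bar> \<le> R"
  shows "norm (XX z R n s t) \<le> ((cmod z + R) * ((2 * R + 2 * \<bar>Re z\<bar>) / Kc (Re z) (Im z) R
     * (1 / (1 - (1 - (Im z)^2 / Kc (Re z) (Im z) R)))^2) + 1 / (1 - (1 - (Im z)^2 / Kc (Re z) (Im z) R)))
     / Kc (Re z) (Im z) R"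
proof -
  define K \<rho> where "K = Kc (Re z) (Im z) R" "\<rho> = 1 - (Im z)^2 / K"
  define B where "B = 1 / (1 - \<rho>)"
  define us ut where "us = uu (Re z) (Im z) R s" "ut = uu (Re z) (Im z) R t"
  have K: "K > 0" unfolding K_\<rho>_def by (rule Kc_pos)
  have R0: "0 \<le> R" using assms(2) by simp
  have ubs: "0 \<le> us" "us \<le> \<rho>" "\<rho> < 1" using uu_bounds[OF assms(1,2), of "Re z"] unfolding K_\<rho>_def us_ut_def by auto
  have ubt: "0 \<le> ut" "ut \<le> \<rho>" using uu_bounds[OF assms(1,3), of "Re z"] unfolding K_\<rho>_def us_ut_def by auto
  note ibs = inv_bound[OF ubs] and ibt = inv_bound[OF ubt ubs(3)]
  have B0: "0 \<le> B" unfolding B_def using ubs by simp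
  have S: "0 \<le> poly (Sp (Re z) (Im z) R n) t" "poly (Sp (Re z) (Im z) R n) t \<le> B"
    unfolding poly_Sp B_def using ubt geo_lim(2)[of ut n] ibt unfolding us_ut_def
    by (auto intro!: sum_nonneg)
  define T where "T = (\<Sum>k<n. \<Sum>i\<le>k. us ^ i * ut ^ (k - i))"
  have T0: "0 \<le> T" unfolding T_def using ubs ubt by (auto intro!: sum_nonneg)
  have "T \<le> 1 / ((1 - us) * (1 - ut))" unfolding T_def by (rule cauchy_lim(2)) (use ibs ibt ubs ubt in auto)
  also have "\<dots> = (1 / (1 - us)) * (1 / (1 - ut))" by simp
  also have "\<dots> \<le> B * B" unfolding B_def using ibs ibt ubs by (intro mult_mono) auto
  finally have TB: "T \<le> B^2" by (simp add: power2_eq_square)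
  have dU: "\<bar>dd (UU (Re z) (Im z) R) s t\<bar> \<le> (2 * R + 2 * \<bar>Re z\<bar>) / K"
    unfolding dd_UU K_\<rho>_def[symmetric] using K assms(2,3)
    by (simp add: abs_minus_commute divide_right_mono abs_triangle_ineq4 del: divide_minus_left)
  have dS: "\<bar>dd (Sp (Re z) (Im z) R n) s t\<bar> \<le> (2 * R + 2 * \<bar>Re z\<bar>) / K * B^2"
    unfolding dd_Sp us_ut_def[symmetric] T_def[symmetric] abs_mult using T0 TB dU
    by (intro mult_mono) auto
  have c: "cmod (cnj z - complex_of_real s) \<le> cmod z + R"
    using norm_triangle_ineq4[of "cnj z" "complex_of_real s"] assms(2) by simp
  have "norm (XX z R n s t) \<le> (cmod (cnj z - complex_of_real s) * \<bar>dd (Sp (Re z) (Im z) R n) s t\<bar>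
       + \<bar>poly (Sp (Re z) (Im z) R n) t\<bar>) / K"
    unfolding XX_closed K_\<rho>_def[symmetric] using K
    by (simp add: norm_divide divide_right_mono norm_mult norm_triangle_ineq4[THEN order_trans]
        del: of_real_diff)
  also have "\<dots> \<le> ((cmod z + R) * ((2 * R + 2 * \<bar>Re z\<bar>) / K * B^2) + B) / K"
    using K c dS S R0 by (intro divide_right_mono add_mono mult_mono) auto
  finally show ?thesis unfolding K_\<rho>_def B_def .
qed

lemma dom_conv:
  fixes M :: "real measure" and F :: "nat \<Rightarrow> real \<Rightarrow> complex" and f :: "real \<Rightarrow> complex"
  assumes "prob_space M" "AE x in M. \<bar>x\<bar> \<le> R"
    and "f \<in> borel_measurable M" "\<And>n. F n \<in> borel_measurable M"
    and "\<And>n x. \<bar>x\<bar> \<le> R \<Longrightarrow> norm (F n x) \<le> C"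
    and "\<And>x. \<bar>x\<bar> \<le> R \<Longrightarrow> (\<lambda>n. F n x) \<longlonglongrightarrow> f x"
  shows "(\<lambda>n. \<integral>x. F n x \<partial>M) \<longlonglongrightarrow> (\<integral>x. f x \<partial>M)"
proof -
  interpret prob_space M by fact
  show ?thesis
  proof (rule integral_dominated_convergence[where w="\<lambda>_. C"])
    show "f \<in> borel_measurable M" "\<And>n. F n \<in> borel_measurable M" by fact+
    show "integrable M (\<lambda>_. C)" by simp
    show "AE x in M. (\<lambda>n. F n x) \<longlonglongrightarrow> f x" using assms(2) by eventually_elim (rule assms(6))
    show "AE x in M. norm (F n x) \<le> C" for n using assms(2) by eventually_elim (rule assms(5))
  qed
qed

lemma int_cplx:
  assumes "integrable M g1" "integrable M g2"
  shows "(\<integral>x. complex_of_real (g1 x) + \<i> * complex_of_real (g2 x) \<partial>M)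
    = complex_of_real (integral\<^sup>L M g1) + \<i> * complex_of_real (integral\<^sup>L M g2)"
  using assms by simp

lemma norm_int_bound:
  fixes M :: "real measure" and f :: "real \<Rightarrow> complex"
  assumes "prob_space M" "AE x in M. norm (f x) \<le> C" "integrable M f"
  shows "norm (\<integral>x. f x \<partial>M) \<le> C"
proof -
  interpret prob_space M by fact
  have "norm (\<integral>x. f x \<partial>M) \<le> (\<integral>x. norm (f x) \<partial>M)" by (rule integral_norm_bound)
  also have "\<dots> \<le> (\<integral>x. C \<partial>M)" using assms(2,3) by (intro integral_mono_AE) auto
  finally show ?thesis using prob_space by simp
qed

lemma cont_dd: "continuous_on UNIV (\<lambda>t. dd f s t)"
  unfolding dd_def poly_LopG by (intro continuous_intros)

lemma cont_FF: "continuous_on UNIV (FF z R n)"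
  unfolding FF_def by (intro continuous_intros)

lemma cont_XX: "continuous_on UNIV (XX z R n s)"
  unfolding XX_def by (intro continuous_intros cont_dd[THEN continuous_on_compose2]) auto

lemma analytic:
  fixes M N :: "real measure"
  assumes PM: "prob_space M" "sets M = sets borel" "AE x in M. \<bar>x\<bar> \<le> R"
    and PN: "prob_space N" "sets N = sets borel" "AE x in N. \<bar>x\<bar> \<le> R"
    and star: "\<forall>f. (\<integral>x. (x - c0) * poly f x \<partial>M) = \<gamma> * (\<integral>y. poly (Lop M f) y \<partial>N)"
    and z: "Im z \<noteq> 0"
  shows "(\<integral>x. complex_of_real (x - c0) * (1 / (z - complex_of_real x)) \<partial>M)
     = complex_of_real \<gamma> * (cauchy_transform M z * cauchy_transform N z)"
proof -
  define a b where "a = Re z" "b = Im z"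
  define CF where "CF = (cmod z + R) / Kc (Re z) (Im z) R * (1 / (1 - (1 - (Im z)^2 / Kc (Re z) (Im z) R)))"
  define CX where "CX = ((cmod z + R) * ((2 * R + 2 * \<bar>Re z\<bar>) / Kc (Re z) (Im z) R
     * (1 / (1 - (1 - (Im z)^2 / Kc (Re z) (Im z) R)))^2) + 1 / (1 - (1 - (Im z)^2 / Kc (Re z) (Im z) R)))
     / Kc (Re z) (Im z) R"
  define L where "L n = (\<integral>x. complex_of_real (x - c0) * FF z R n x \<partial>M)" for n
  define Y where "Y n s = complex_of_real (poly (Lop M (f1 a b R n)) s)
      + \<i> * complex_of_real (poly (Lop M (f2 a b R n)) s)" for n s
  define GM GN where "GM = cauchy_transform M z" "GN = cauchy_transform N z"
  have intM: "integrable M (\<lambda>x. (x - c0) * poly f x)" for f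
    by (rule int_cont[OF PM]) (intro continuous_intros)
  have intN: "integrable N (\<lambda>x. poly f x)" for f
    by (rule int_cont[OF PN]) (intro continuous_intros)
  have intdd: "integrable M (\<lambda>t. dd f s t)" for f s
    by (rule int_cont[OF PM]) (rule cont_dd)
  have Leq: "L n = complex_of_real \<gamma> * (\<integral>s. Y n s \<partial>N)" for n
  proof -
    have "L n = (\<integral>x. complex_of_real ((x - c0) * poly (f1 a b R n) x)
        + \<i> * complex_of_real ((x - c0) * poly (f2 a b R n) x) \<partial>M)"
      unfolding L_def FF_def a_b_def by (simp add: algebra_simps)
    also have "\<dots> = complex_of_real (\<integral>x. (x - c0) * poly (f1 a b R n) x \<partial>M)
        + \<i> * complex_of_real (\<integral>x. (x - c0) * poly (f2 a b R n) x \<partial>M)"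
      by (rule int_cplx[OF intM intM])
    also have "\<dots> = complex_of_real \<gamma> * (complex_of_real (\<integral>y. poly (Lop M (f1 a b R n)) y \<partial>N)
        + \<i> * complex_of_real (\<integral>y. poly (Lop M (f2 a b R n)) y \<partial>N))"
      using star by (simp add: algebra_simps)
    also have "\<dots> = complex_of_real \<gamma> * (\<integral>s. Y n s \<partial>N)"
      unfolding Y_def by (subst int_cplx[OF intN intN]) simp
    finally show ?thesis .
  qed
  have Yint: "Y n s = (\<integral>t. XX z R n s t \<partial>M)" for n s
    unfolding Y_def XX_def Lop_integral[OF PM] a_b_def by (rule int_cplx[symmetric, OF intdd intdd])
  have L_lim: "L \<longlonglongrightarrow> (\<integral>x. complex_of_real (x - c0) * (1 / (z - complex_of_real x)) \<partial>M)"
    unfolding L_def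
  proof (rule dom_conv[OF PM(1,3), where C="(R + \<bar>c0\<bar>) * CF"])
    show "(\<lambda>x. complex_of_real (x - c0) * (1 / (z - complex_of_real x))) \<in> borel_measurable M"
      by (rule meas_cont[OF PM(2)]) (intro continuous_intros, use z_ne[OF z] in auto)
    show "(\<lambda>x. complex_of_real (x - c0) * FF z R n x) \<in> borel_measurable M" for n
      by (rule meas_cont[OF PM(2)]) (intro continuous_intros cont_FF)
    fix n x assume x: "\<bar>x\<bar> \<le> R"
    have "norm (complex_of_real (x - c0) * FF z R n x) = \<bar>x - c0\<bar> * norm (FF z R n x)"
      by (simp only: norm_mult norm_of_real)
    also have "\<dots> \<le> (R + \<bar>c0\<bar>) * CF"
      unfolding CF_def using FF_bound[OF z x, of n] x by (intro mult_mono) auto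
    finally show "norm (complex_of_real (x - c0) * FF z R n x) \<le> (R + \<bar>c0\<bar>) * CF" .
  next
    fix x assume x: "\<bar>x\<bar> \<le> R"
    show "(\<lambda>n. complex_of_real (x - c0) * FF z R n x) \<longlonglongrightarrow> complex_of_real (x - c0) * (1 / (z - complex_of_real x))"
      by (intro tendsto_mult tendsto_const FF_lim[OF z x])
  qed
  have Y_lim: "(\<lambda>n. Y n s) \<longlonglongrightarrow> 1 / (z - complex_of_real s) * GM" if s: "\<bar>s\<bar> \<le> R" for s
  proof -
    have "(\<lambda>n. \<integral>t. XX z R n s t \<partial>M) \<longlonglongrightarrow> (\<integral>t. 1 / ((z - complex_of_real s) * (z - complex_of_real t)) \<partial>M)"
    proof (rule dom_conv[OF PM(1,3), where C=CX])
      show "(\<lambda>t. 1 / ((z - complex_of_real s) * (z - complex_of_real t))) \<in> borel_measurable M"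
        by (rule meas_cont[OF PM(2)]) (intro continuous_intros, use z_ne[OF z] in auto)
      show "XX z R n s \<in> borel_measurable M" for n by (rule meas_cont[OF PM(2)]) (rule cont_XX)
      show "norm (XX z R n s t) \<le> CX" if "\<bar>t\<bar> \<le> R" for n t unfolding CX_def by (rule XX_bound[OF z s that])
      show "(\<lambda>n. XX z R n s t) \<longlonglongrightarrow> 1 / ((z - complex_of_real s) * (z - complex_of_real t))" if "\<bar>t\<bar> \<le> R" for t
        by (rule XX_lim[OF z s that])
    qed
    moreover have "(\<integral>t. 1 / ((z - complex_of_real s) * (z - complex_of_real t)) \<partial>M) = 1 / (z - complex_of_real s) * GM"
    proof -
      have e: "(\<lambda>t. 1 / ((z - complex_of_real s) * (z - complex_of_real t))) = (\<lambda>t. 1 / (z - complex_of_real s) * (1 / (z - complex_of_real t)))"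
        by (rule ext) simp
      show ?thesis unfolding e GM_GN_def cauchy_transform_def by (rule integral_mult_right_zero)
    qed
    ultimately show ?thesis unfolding Yint by simp
  qed
  have Ybound: "norm (Y n s) \<le> CX" if s: "\<bar>s\<bar> \<le> R" for n s
    unfolding Yint
  proof (rule norm_int_bound[OF PM(1)])
    show "AE x in M. cmod (XX z R n s x) \<le> CX" using PM(3) unfolding CX_def
      by eventually_elim (rule XX_bound[OF z s])
    show "integrable M (XX z R n s)" by (rule int_cont[OF PM]) (rule cont_XX)
  qed
  have R_lim: "(\<lambda>n. \<integral>s. Y n s \<partial>N) \<longlonglongrightarrow> (\<integral>s. 1 / (z - complex_of_real s) * GM \<partial>N)"
  proof (rule dom_conv[OF PN(1,3), where C=CX])
    show "(\<lambda>s. 1 / (z - complex_of_real s) * GM) \<in> borel_measurable N"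
      by (rule meas_cont[OF PN(2)]) (intro continuous_intros, use z_ne[OF z] in auto)
    show "Y n \<in> borel_measurable N" for n
      unfolding Y_def[abs_def] by (rule meas_cont[OF PN(2)]) (intro continuous_intros)
  qed (use Ybound Y_lim in auto)
  have "(\<integral>s. 1 / (z - complex_of_real s) * GM \<partial>N) = GN * GM"
    unfolding GM_GN_def cauchy_transform_def by (rule integral_mult_left_zero)
  hence "L \<longlonglongrightarrow> complex_of_real \<gamma> * (GM * GN)"
    using tendsto_mult[OF tendsto_const R_lim, of "complex_of_real \<gamma>"] unfolding Leq[abs_def]
    by (simp add: mult.commute)
  with L_lim show ?thesis unfolding GM_GN_def using LIMSEQ_unique by blast
qed

theorem proposition4p6:
  fixes M N :: "real measure" and p q :: "real poly" and P :: "nat \<Rightarrow> real poly"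
  assumes "prob_space M" "sets M = sets borel" "compactly_supported M"
    and "prob_space N" "sets N = sets borel" "compactly_supported N"
    and "\<forall>a. M \<noteq> return borel a"
    and "p \<noteq> 0 \<or> q \<noteq> 0"
    and "\<forall>n. P n \<noteq> 0 \<and> degree (P n) = n"
    and "\<forall>n. \<exists>c::real. p * Lop N (Lop M (P n)) + q * Lop M (P n) = smult c (P n)"
    and "\<forall>n m. n \<noteq> m \<longrightarrow> (\<integral>x. poly (P n) x * poly (P m) x \<partial>M) = 0"
  shows "\<exists>\<beta> \<gamma>. \<gamma> > 0 \<and> is_Phi \<beta> \<gamma> N M"
proof -
  define m1 \<gamma> where "m1 = moment M 1" "\<gamma> = moment M 2 - (moment M 1)^2"
  have br: "\<gamma> > 0" "\<forall>f. (\<integral>x. (x - m1) * poly f x \<partial>M) = \<gamma> * (\<integral>y. poly (Lop M f) y \<partial>N)"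
    using bridge[OF assms] unfolding m1_\<gamma>_def by auto
  obtain RM where RM: "AE x in M. \<bar>x\<bar> \<le> RM" using ae_bound assms(2,3) by blast
  obtain RN where RN: "AE x in N. \<bar>x\<bar> \<le> RN" using ae_bound assms(5,6) by blast
  define R where "R = max RM RN"
  have RM': "AE x in M. \<bar>x\<bar> \<le> R" using RM unfolding R_def by eventually_elim auto
  have RN': "AE x in N. \<bar>x\<bar> \<le> R" using RN unfolding R_def by eventually_elim auto
  have "is_Phi m1 \<gamma> N M"
    unfolding is_Phi_def
  proof (intro allI impI)
    fix z :: complex assume z: "Im z \<noteq> 0"
    define GM GN where "GM = cauchy_transform M z" "GN = cauchy_transform N z"
    have A: "(\<integral>x. complex_of_real (x - m1) * (1 / (z - complex_of_real x)) \<partial>M)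
       = complex_of_real \<gamma> * (GM * GN)"
      unfolding GM_GN_def by (rule analytic[OF assms(1,2) RM' assms(4,5) RN' br(2) z])
    have pw: "complex_of_real (x - m1) * (1 / (z - complex_of_real x))
        = (z - complex_of_real m1) * (1 / (z - complex_of_real x)) - 1" for x
      using z_ne[OF z, of x] by (simp add: field_simps)
    have int1: "integrable M (\<lambda>x. 1 / (z - complex_of_real x))"
      by (rule int_cont[OF assms(1,2) RM']) (intro continuous_intros, use z_ne[OF z] in auto)
    have "(\<integral>x. complex_of_real (x - m1) * (1 / (z - complex_of_real x)) \<partial>M)
        = (\<integral>x. (z - complex_of_real m1) * (1 / (z - complex_of_real x)) - 1 \<partial>M)"
      unfolding pw ..
    also have "\<dots> = (z - complex_of_real m1) * GM - 1"
    proof -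
      have i2: "integrable M (\<lambda>x. (z - complex_of_real m1) * (1 / (z - complex_of_real x)))"
        using int1 by (rule integrable_mult_right)
      have i3: "integrable M (\<lambda>x. 1::complex)"
        by (rule int_cont[OF assms(1,2) RM']) (intro continuous_intros)
      show ?thesis
        unfolding Bochner_Integration.integral_diff[OF i2 i3] integral_mult_right_zero GM_GN_def cauchy_transform_def
        using prob_space.prob_space[OF assms(1)] by simp
    qed
    finally have "(z - complex_of_real m1) * GM - 1 = complex_of_real \<gamma> * (GM * GN)" using A by simp
    hence e: "GM * (z - complex_of_real m1 - complex_of_real \<gamma> * GN) = 1" by (simp add: algebra_simps)
    hence "z - complex_of_real m1 - complex_of_real \<gamma> * GN \<noteq> 0" by auto
    thus "cauchy_transform M z = 1 / (z - complex_of_real m1 - complex_of_real \<gamma> * cauchy_transform N z)"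
      using e unfolding GM_GN_def by (simp add: field_simps)
  qed
  thus ?thesis using br(1) by blast
qed

end
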